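(* Let $\varepsilon\in[0,1)$ and $M_2>M_1\ge N>1$. Then there exists a linear map $\mathcal{L}$ on operators of the qubit $B$ such that $T(\mathcal{L}(|1\rangle\langle1|),|1\rangle\langle1|)\le\varepsilon$, $\mathcal{L}(\pi_{M_1})=\pi_N$ and $\mathcal{L}(\pi_{M_2})=\pi_N$ (i.e. the conversion $(|1\rangle\langle1|,\{\pi_{M_1},\pi_{M_2}\})\xrightarrow{\mathcal{L},\varepsilon}(|1\rangle\langle1|,\pi_N)$ is achievable by a Gibbs-preserving linear map) if and only if $\varepsilon\ge 1-1/N$.
   Context: $B$ is a qubit with orthonormal basis $\{|0\rangle,|1\rangle\}$; for $M>1$, $\pi_M=(1-\tfrac1M)|0\rangle\langle0|+\tfrac1M|1\rangle\langle1|$ is the Gibbs state of a battery of capacity $M$. $T(X,Y)=\tfrac12\|X-Y\|_1$. *)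

theory Defs
  imports "HOL-Analysis.Analysis"
begin

text \<open>Operators on the qubit B: complex 2x2 matrices, indexed by the type 2.
  Index 0 corresponds to the basis vector |0>, index 1 to |1>.\<close>

type_synonym qop = "complex^2^2"

definition ketbra :: "2 \<Rightarrow> qop" where
  "ketbra k = (\<chi> i j. if i = k \<and> j = k then 1 else 0)"

definition proj0 :: qop where "proj0 = ketbra 0"
definition proj1 :: qop where "proj1 = ketbra 1"

definition mscale :: "complex \<Rightarrow> qop \<Rightarrow> qop" where
  "mscale c A = (\<chi> i j. c * A $ i $ j)"

definition is_linear_map :: "(qop \<Rightarrow> qop) \<Rightarrow> bool" where
  "is_linear_map L \<longleftrightarrow> (\<forall>A B. L (A + B) = L A + L B) \<and> (\<forall>c A. L (mscale c A) = mscale c (L A))"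

definition adjoint_op :: "qop \<Rightarrow> qop" where
  "adjoint_op A = (\<chi> i j. cnj (A $ j $ i))"

definition psd :: "qop \<Rightarrow> bool" where
  "psd P \<longleftrightarrow> (\<forall>v::complex^2. let q = (\<Sum>i\<in>UNIV. cnj (v $ i) * (P *v v) $ i) in Im q = 0 \<and> Re q \<ge> 0)"

text \<open>Trace norm: trace of |A| = sqrt(A^* A), the unique psd square root.\<close>
definition trace_norm :: "qop \<Rightarrow> real" where
  "trace_norm A = (THE r. \<exists>P. psd P \<and> P ** P = adjoint_op A ** A \<and> r = Re (trace P))"

definition tdist :: "qop \<Rightarrow> qop \<Rightarrow> real" where
  "tdist X Y = trace_norm (X - Y) / 2"

definition gibbs :: "real \<Rightarrow> qop" where
  "gibbs M = mscale (complex_of_real (1 - 1 / M)) proj0 + mscale (complex_of_real (1 / M)) proj1"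

end

theory Submission
  imports Defs
begin

lemma two_eq0: "(2::2) = 0" by simp
lemma ex2: "x = (0::2) \<or> x = 1" using exhaust_2[of x] two_eq0 by auto
lemma UNIV_2': "(UNIV::2 set) = {0, 1}"
  using ex2 by auto

lemma sum_2': "sum f (UNIV::2 set) = f 0 + f 1"
  unfolding UNIV_2' by simp

lemma forall_2': "(\<forall>i::2. P i) \<longleftrightarrow> P 0 \<and> P 1"
  using ex2 by metis

lemma qop_eq: "(A::qop) = B \<longleftrightarrow> A$0$0 = B$0$0 \<and> A$0$1 = B$0$1 \<and> A$1$0 = B$1$0 \<and> A$1$1 = B$1$1"
  by (auto simp: vec_eq_iff forall_2')

lemma psd_at:
  assumes "psd P"
  shows "Im (cnj x * (P$0$0 * x + P$0$1 * y) + cnj y * (P$1$0 * x + P$1$1 * y)) = 0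
       \<and> Re (cnj x * (P$0$0 * x + P$0$1 * y) + cnj y * (P$1$0 * x + P$1$1 * y)) \<ge> 0"
proof -
  define v :: "complex^2" where "v = (\<chi> i. if i = 0 then x else y)"
  have v0: "v$0 = x" and v1: "v$1 = y" by (auto simp: v_def)
  have "(\<Sum>i\<in>UNIV. cnj (v $ i) * (P *v v) $ i) =
     cnj x * (P$0$0 * x + P$0$1 * y) + cnj y * (P$1$0 * x + P$1$1 * y)"
    by (simp add: sum_2' matrix_vector_mult_def v0 v1)
  with assms[unfolded psd_def, rule_format, of v] show ?thesis by (simp add: Let_def)
qed

lemma sqrt_unique:
  fixes a :: real
  assumes a: "a > 0" and P: "psd P"
    and PP: "P ** P = (\<chi> i j. if i = j then complex_of_real (a^2) else 0)"
  shows "Re (trace P) = 2 * a"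
proof -
  define p where "p = P$0$0"
  define q where "q = P$0$1"
  define r where "r = P$1$0"
  define s where "s = P$1$1"
  have hp: "Im p = 0 \<and> Re p \<ge> 0" using psd_at[OF P, of 1 0] by (simp add: p_def)
  have hs: "Im s = 0 \<and> Re s \<ge> 0" using psd_at[OF P, of 0 1] by (simp add: s_def)
  have e1: "p * p + q * r = complex_of_real (a^2)" and e2: "p * q + q * s = 0" and e3: "r * p + s * r = 0" and e4: "r * q + s * s = complex_of_real (a^2)"
    using PP unfolding qop_eq
    by (simp_all add: matrix_matrix_mult_def sum_2' p_def q_def r_def s_def)
  have Q: "\<And>x y. Im (cnj x * (p * x + q * y) + cnj y * (r * x + s * y)) = 0
       \<and> Re (cnj x * (p * x + q * y) + cnj y * (r * x + s * y)) \<ge> 0"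
    using psd_at[OF P] unfolding p_def q_def r_def s_def by blast
  have tr: "trace P = p + s" by (simp add: trace_def sum_2' p_def s_def)
  show ?thesis
  proof (cases "p + s = 0")
    case True
    then have p0: "p = 0" and s0: "s = 0" using hp hs by (auto simp: complex_eq_iff)
    have A: "Im (q + r) = 0 \<and> Re (q + r) \<ge> 0" using Q[of 1 1] by (simp add: p0 s0)
    have B: "Im (-(q + r)) = 0 \<and> Re (-(q + r)) \<ge> 0" using Q[of 1 "-1"] by (simp add: p0 s0)
    have C: "Im (\<i>*(q - r)) = 0 \<and> Re (\<i>*(q - r)) \<ge> 0" using Q[of 1 "\<i>"] by (simp add: p0 s0 algebra_simps)
    have D: "Im (-\<i>*(q - r)) = 0 \<and> Re (-\<i>*(q - r)) \<ge> 0" using Q[of 1 "-\<i>"] by (simp add: p0 s0 algebra_simps)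
    have "q + r = 0" using A B by (auto simp: complex_eq_iff)
    moreover have "q - r = 0" using C D by (auto simp: complex_eq_iff)
    ultimately have "q = 0" "r = 0" by auto
    with e1 p0 a have False by simp
    then show ?thesis ..
  next
    case False
    have "q = 0" using e2 False by (metis distrib_right mult.commute mult_eq_0_iff)
    moreover have "r = 0" using e3 False by (metis distrib_left mult.commute mult_eq_0_iff)
    ultimately have "p * p = complex_of_real (a^2)" "s * s = complex_of_real (a^2)" using e1 e4 by auto
    then have "Re p * Re p = a^2" "Re s * Re s = a^2" using hp hs by (simp_all add: complex_eq_iff)
    then have "Re p = a" "Re s = a" using hp hs a
      by (metis abs_of_nonneg less_imp_le power2_eq_square real_sqrt_abs real_sqrt_mult_self)+
    then show ?thesis using tr by simp
  qed
qed


lemma trace_norm_diag: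
  fixes a :: real
  assumes a: "a > 0"
    and AA: "adjoint_op A ** A = (\<chi> i j. if i = j then complex_of_real (a^2) else 0)"
  shows "trace_norm A = 2 * a"
proof -
  define P0 :: qop where "P0 = (\<chi> i j. if i = j then complex_of_real a else 0)"
  have "psd P0"
    unfolding psd_def
  proof
    fix v :: "complex^2"
    have e: "(\<Sum>i\<in>UNIV. cnj (v $ i) * (P0 *v v) $ i) =
       complex_of_real a * (cnj (v$0) * v$0 + cnj (v$1) * v$1)"
      by (simp add: sum_2' matrix_vector_mult_def P0_def algebra_simps)
    show "let q = (\<Sum>i\<in>UNIV. cnj (v $ i) * (P0 *v v) $ i) in Im q = 0 \<and> Re q \<ge> 0"
      unfolding e Let_def using a by (simp add: complex_mult_cnj)
  qed
  moreover have "P0 ** P0 = adjoint_op A ** A"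
    unfolding AA qop_eq by (simp add: matrix_matrix_mult_def sum_2' P0_def power2_eq_square)
  moreover have "Re (trace P0) = 2 * a"
    by (simp add: trace_def sum_2' P0_def)
  ultimately have ex: "\<exists>P. psd P \<and> P ** P = adjoint_op A ** A \<and> 2 * a = Re (trace P)"
    by metis
  show ?thesis
    unfolding trace_norm_def
  proof (rule the_equality)
    show "\<exists>P. psd P \<and> P ** P = adjoint_op A ** A \<and> 2 * a = Re (trace P)" by (rule ex)
  next
    fix r assume "\<exists>P. psd P \<and> P ** P = adjoint_op A ** A \<and> r = Re (trace P)"
    then obtain P where "psd P" "P ** P = adjoint_op A ** A" "r = Re (trace P)" by blast
    then show "r = 2 * a" using sqrt_unique[OF a, of P] AA by simp
  qed
qed

lemma mscale_nth: "mscale c A $ i $ j = c * A $ i $ j"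
  by (simp add: mscale_def)

lemma proj_nth:
  "proj0 $ 0 $ 0 = 1" "proj0 $ 0 $ 1 = 0" "proj0 $ 1 $ 0 = 0" "proj0 $ 1 $ 1 = 0"
  "proj1 $ 0 $ 0 = 0" "proj1 $ 0 $ 1 = 0" "proj1 $ 1 $ 0 = 0" "proj1 $ 1 $ 1 = 1"
  by (simp_all add: proj0_def proj1_def ketbra_def)

lemma gibbs_nth:
  "gibbs M $ 0 $ 0 = complex_of_real (1 - 1 / M)" "gibbs M $ 0 $ 1 = 0"
  "gibbs M $ 1 $ 0 = 0" "gibbs M $ 1 $ 1 = complex_of_real (1 / M)"
  by (simp_all add: gibbs_def mscale_nth proj_nth)

lemma tdist_gibbs:
  assumes N: "N > 1"
  shows "tdist (gibbs N) proj1 = 1 - 1 / N"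
proof -
  have a: "1 - 1 / N > 0" using N by (simp add: field_simps)
  have "adjoint_op (gibbs N - proj1) ** (gibbs N - proj1) =
      (\<chi> i j. if i = j then complex_of_real ((1 - 1 / N)^2) else 0)"
    using N unfolding qop_eq
    by (simp add: matrix_matrix_mult_def sum_2' adjoint_op_def gibbs_nth proj_nth power2_eq_square field_simps)
  from trace_norm_diag[OF a this] show ?thesis by (simp add: tdist_def)
qed

lemma cancel_lemma:
  fixes x y g :: complex and u w :: real
  assumes "u \<noteq> w"
    and "g = complex_of_real (1 - u) * x + complex_of_real u * y"
    and "g = complex_of_real (1 - w) * x + complex_of_real w * y"
  shows "g = y"
proof -
  have "complex_of_real (u - w) * (y - x) = 0" using assms(2,3) by (simp add: algebra_simps)
  then have "y = x" using assms(1) by simp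
  then show ?thesis using assms(2) by (simp add: algebra_simps)
qed

theorem corollary3:
  fixes \<epsilon> M1 M2 N :: real
  assumes "0 \<le> \<epsilon>" and "\<epsilon> < 1"
    and "N > 1" and "M1 \<ge> N" and "M2 > M1"
  shows "(\<exists>L. is_linear_map L \<and> tdist (L proj1) proj1 \<le> \<epsilon>
                \<and> L (gibbs M1) = gibbs N \<and> L (gibbs M2) = gibbs N)
         \<longleftrightarrow> \<epsilon> \<ge> 1 - 1 / N"
proof
  assume "\<exists>L. is_linear_map L \<and> tdist (L proj1) proj1 \<le> \<epsilon>
                \<and> L (gibbs M1) = gibbs N \<and> L (gibbs M2) = gibbs N"
  then obtain L where lin: "is_linear_map L" and td: "tdist (L proj1) proj1 \<le> \<epsilon>"
    and g1: "L (gibbs M1) = gibbs N" and g2: "L (gibbs M2) = gibbs N" by blast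
  have Lg: "L (gibbs M) = mscale (complex_of_real (1 - 1 / M)) (L proj0) + mscale (complex_of_real (1 / M)) (L proj1)" for M
    using lin unfolding is_linear_map_def gibbs_def by simp
  have ne: "1 / M1 \<noteq> 1 / M2" using assms by simp
  have "L proj1 = gibbs N"
    unfolding vec_eq_iff
  proof (intro allI)
    fix i j
    show "L proj1 $ i $ j = gibbs N $ i $ j"
      using cancel_lemma[OF ne, of "gibbs N $ i $ j" "L proj0 $ i $ j" "L proj1 $ i $ j"]
        g1 g2 Lg[of M1] Lg[of M2]
      by (metis (no_types) mscale_nth vector_add_component)
  qed
  then show "\<epsilon> \<ge> 1 - 1 / N" using td tdist_gibbs[OF assms(3)] by simp
next
  assume eps: "\<epsilon> \<ge> 1 - 1 / N"
  define L where "L = (\<lambda>A::qop. mscale (A $ 0 $ 0 + A $ 1 $ 1) (gibbs N))"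
  have "is_linear_map L"
    unfolding is_linear_map_def L_def
    by (simp add: vec_eq_iff mscale_nth algebra_simps)
  moreover have "L proj1 = gibbs N"
    by (simp add: L_def proj_nth vec_eq_iff mscale_nth)
  moreover have "L (gibbs M) = gibbs N" for M
  proof -
    have "gibbs M $ 0 $ 0 + gibbs M $ 1 $ 1 = 1"
      unfolding gibbs_nth by (simp flip: of_real_add)
    then show ?thesis by (simp add: L_def vec_eq_iff mscale_nth)
  qed
  ultimately show "\<exists>L. is_linear_map L \<and> tdist (L proj1) proj1 \<le> \<epsilon>
                \<and> L (gibbs M1) = gibbs N \<and> L (gibbs M2) = gibbs N"
    using eps tdist_gibbs[OF assms(3)] by metis
qed

end
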